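(* Let $N=\{1,\dots,n\}$, let $U$ be a finite set, $S_1,\dots,S_n\subseteq U$, $w:U\to\mathbb{R}$, $c\in\mathbb{R}$, and let $s:2^N\to\mathbb{R}$ be defined by $s_A=c+\mathbf{w}(\bigcup_{i\in A}S_i)$, where $\mathbf{w}(S)=\sum_{u\in S}w(u)$. Define the type-4 discrete set Fourier transform of $s$ by $\widehat{s}^{(4)}_B=\sum_{A\subseteq N,\,A\cup B=N}(-1)^{|A\cap B|}s_A$ for $B\subseteq N$. Then $$\widehat{s}^{(4)}_B=\begin{cases}-\mathbf{w}\Big(\bigcap_{i\in B}S_i\setminus\bigcup_{i\notin B}S_i\Big), & B\neq\emptyset,\\ s_N, & B=\emptyset.\end{cases}$$ *)

theory Defs
  imports Complex_Main
begin

definition wt :: "('a \<Rightarrow> real) \<Rightarrow> 'a set \<Rightarrow> real" where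
  "wt w S = (\<Sum>u\<in>S. w u)"

definition fourier4 :: "'b set \<Rightarrow> ('b set \<Rightarrow> real) \<Rightarrow> 'b set \<Rightarrow> real" where
  "fourier4 N s B = (\<Sum>A\<in>{A. A \<subseteq> N \<and> A \<union> B = N}. (-1) ^ card (A \<inter> B) * s A)"

end

theory Submission
  imports Defs
begin

lemma alt_sum:
  assumes "finite B"
  shows "(\<Sum>C\<in>Pow B. (-1::real) ^ card C) = (if B = {} then 1 else 0)"
  using assms
proof (induction B rule: finite_induct)
  case empty
  then show ?case by simp
next
  case (insert x F)
  have inj: "inj_on (insert x) (Pow F)"
  proof (rule inj_onI)
    fix A C assume "A \<in> Pow F" "C \<in> Pow F" "insert x A = insert x C"
    then show "A = C" using insert.hyps(2) by (metis Pow_iff insert_ident subsetD)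
  qed
  have disj: "Pow F \<inter> insert x ` Pow F = {}" using insert.hyps(2) by auto
  have "(\<Sum>C\<in>Pow (insert x F). (-1::real) ^ card C)
      = (\<Sum>C\<in>Pow F. (-1::real) ^ card C) + (\<Sum>C\<in>insert x ` Pow F. (-1::real) ^ card C)"
    unfolding Pow_insert by (rule sum.union_disjoint) (use insert.hyps disj in auto)
  also have "(\<Sum>C\<in>insert x ` Pow F. (-1::real) ^ card C) = (\<Sum>C\<in>Pow F. (-1::real) ^ card (insert x C))"
    by (rule sum.reindex[OF inj, unfolded comp_def])
  also have "\<dots> = (\<Sum>C\<in>Pow F. - ((-1::real) ^ card C))"
  proof (rule sum.cong[OF refl])
    fix C assume "C \<in> Pow F"
    then have "finite C" "x \<notin> C" using insert.hyps finite_subset by auto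
    then show "(-1::real) ^ card (insert x C) = - ((-1::real) ^ card C)" by simp
  qed
  finally show ?case by (simp add: sum_negf)
qed

lemma alt_sum2:
  assumes "finite B" "T \<subseteq> B" "B \<noteq> {}"
  shows "(\<Sum>C\<in>Pow B. (-1::real) ^ card C * (if C \<inter> T = {} then 0 else 1)) = (if T = B then -1 else 0)"
proof -
  have e: "\<And>C. (-1::real) ^ card C * (if C \<inter> T = {} then 0 else 1)
      = (-1::real) ^ card C - (if C \<inter> T = {} then (-1::real) ^ card C else 0)" by simp
  have f: "(\<Sum>C\<in>Pow B. (if C \<inter> T = {} then (-1::real) ^ card C else 0))
       = (\<Sum>C\<in>{C\<in>Pow B. C \<inter> T = {}}. (-1::real) ^ card C)"
    by (rule sum.inter_filter[symmetric]) (use assms in simp)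
  have g: "{C\<in>Pow B. C \<inter> T = {}} = Pow (B - T)" by auto
  show ?thesis unfolding e sum_subtractf f g
    using assms alt_sum[of B] alt_sum[of "B - T"] by auto
qed

theorem theorem3:
  fixes n :: nat and U :: "'a set" and S :: "nat \<Rightarrow> 'a set"
    and w :: "'a \<Rightarrow> real" and c :: real and s :: "nat set \<Rightarrow> real" and B :: "nat set"
  assumes "finite U"
    and "\<And>i. i \<in> {1..n} \<Longrightarrow> S i \<subseteq> U"
    and "\<And>A. A \<subseteq> {1..n} \<Longrightarrow> s A = c + wt w (\<Union>i\<in>A. S i)"
    and "B \<subseteq> {1..n}"
  shows "fourier4 {1..n} s B =
           (if B \<noteq> {} then - wt w ((\<Inter>i\<in>B. S i) - (\<Union>i\<in>{1..n} - B. S i))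
            else s {1..n})"
proof (cases "B = {}")
  case True
  have "{A. A \<subseteq> {1..n} \<and> A \<union> B = {1..n}} = {{1..n}}" using True by auto
  then show ?thesis using True by (simp add: fourier4_def)
next
  case False
  let ?N = "{1..n::nat}"
  have finB: "finite B" using assms(4) finite_subset by blast
  have inj: "inj_on (\<lambda>C. (?N - B) \<union> C) (Pow B)"
    by (auto simp: inj_on_def)
  have img: "{A. A \<subseteq> ?N \<and> A \<union> B = ?N} = (\<lambda>C. (?N - B) \<union> C) ` Pow B"
  proof
    show "{A. A \<subseteq> ?N \<and> A \<union> B = ?N} \<subseteq> (\<lambda>C. (?N - B) \<union> C) ` Pow B"
    proof
      fix A assume "A \<in> {A. A \<subseteq> ?N \<and> A \<union> B = ?N}"
      then have "A = (?N - B) \<union> (A \<inter> B)" "A \<inter> B \<in> Pow B" by auto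
      then show "A \<in> (\<lambda>C. (?N - B) \<union> C) ` Pow B" by blast
    qed
  qed (use assms(4) in auto)
  define out where "out u = (\<exists>i\<in>?N - B. u \<in> S i)" for u
  define T where "T u = {i\<in>B. u \<in> S i}" for u
  define ind where "ind C u = (if out u then 1 else (if C \<inter> T u = {} then 0 else (1::real)))" for C u
  have sA: "s ((?N - B) \<union> C) = c + (\<Sum>u\<in>U. w u * ind C u)" if "C \<subseteq> B" for C
  proof -
    have sub: "(\<Union>i\<in>(?N - B) \<union> C. S i) \<subseteq> U" using assms(2,4) that by blast
    have "wt w (\<Union>i\<in>(?N - B) \<union> C. S i) = (\<Sum>u\<in>U. if u \<in> (\<Union>i\<in>(?N - B) \<union> C. S i) then w u else 0)"
      unfolding wt_def using sum.inter_filter[OF assms(1), of w "\<lambda>u. u \<in> (\<Union>i\<in>(?N - B) \<union> C. S i)"] sub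
      by (simp add: Int_absorb1 Collect_conj_eq Int_commute inf.absorb_iff2 inf_set_def)
    also have "\<dots> = (\<Sum>u\<in>U. w u * ind C u)"
      by (rule sum.cong[OF refl]) (use that in \<open>auto simp: ind_def out_def T_def\<close>)
    finally show ?thesis using assms(3)[of "(?N - B) \<union> C"] assms(4) that by auto
  qed
  have inner: "(\<Sum>C\<in>Pow B. (-1::real) ^ card C * ind C u) = (if \<not> out u \<and> T u = B then -1 else 0)" for u
  proof (cases "out u")
    case True
    then show ?thesis using alt_sum[OF finB] False by (simp add: ind_def)
  next
    case f: False
    have "T u \<subseteq> B" by (auto simp: T_def)
    then show ?thesis using alt_sum2[OF finB _ False, of "T u"] f by (simp add: ind_def)
  qed
  have "fourier4 ?N s B = (\<Sum>C\<in>Pow B. (-1) ^ card (((?N - B) \<union> C) \<inter> B) * s ((?N - B) \<union> C))"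
    unfolding fourier4_def img by (rule sum.reindex[OF inj, unfolded comp_def])
  also have "\<dots> = (\<Sum>C\<in>Pow B. (-1) ^ card C * (c + (\<Sum>u\<in>U. w u * ind C u)))"
  proof (rule sum.cong[OF refl])
    fix C assume "C \<in> Pow B"
    then have "((?N - B) \<union> C) \<inter> B = C" by auto
    then show "(-1) ^ card (((?N - B) \<union> C) \<inter> B) * s ((?N - B) \<union> C) = (-1) ^ card C * (c + (\<Sum>u\<in>U. w u * ind C u))"
      using sA \<open>C \<in> Pow B\<close> by auto
  qed
  also have "\<dots> = c * (\<Sum>C\<in>Pow B. (-1) ^ card C) + (\<Sum>u\<in>U. w u * (\<Sum>C\<in>Pow B. (-1::real) ^ card C * ind C u))"
    by (simp add: algebra_simps sum.distrib sum_distrib_left sum_distrib_right sum.swap[of _ U])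
  also have "\<dots> = (\<Sum>u\<in>U. w u * (if \<not> out u \<and> T u = B then -1 else 0))"
    using alt_sum[OF finB] False inner by simp
  also have "\<dots> = - (\<Sum>u\<in>{u\<in>U. \<not> out u \<and> T u = B}. w u)"
    by (simp add: sum.inter_filter[OF assms(1)] sum_negf[symmetric] if_distrib cong: if_cong)
  also have "{u\<in>U. \<not> out u \<and> T u = B} = (\<Inter>i\<in>B. S i) - (\<Union>i\<in>?N - B. S i)"
    using False assms(2,4) by (auto simp: out_def T_def) (meson atLeastAtMost_iff subsetD)
  finally show ?thesis using False by (simp add: wt_def)
qed

end
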